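(* Assume $p\equiv-1\pmod 6$ and let $q=p^f$. Let $S=\{1,5\}\times\{1,\dots,q-1\}$, and let $p$ act on $S$ by $(b,a)\mapsto(b',a')$ where $b'=6-b$ and $a'\in\{1,\dots,q-1\}$ is determined by $$a'\equiv pa-\tfrac{p+1}{6}b+1\pmod{q-1}.$$ Let $S_0=\{(1,a):0<a<q/6\}$ and $S_1=\{(5,a):5q/6<a<q\}$. Then every orbit $o$ of the group $\langle p\rangle$ generated by this action satisfies $|o\cap S_0|=|o\cap S_1|$.
   Context: The map $(b,a)\mapsto(b',a')$ is a bijection of $S$ (it corresponds to multiplication by $p$ on pairs $(i,j)$ with $i\in\{\pm1\}\subset(\mathbb Z/6)^\times$, $j\in\mathbb Z/6(q-1)\mathbb Z$, $j\equiv 6a-b$, $i\equiv b\bmod 6$), so $\langle p\rangle$ acts on the finite set $S$. *)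

theory Defs
  imports "HOL-Computational_Algebra.Primes"
begin

definition S_set :: "int \<Rightarrow> (int \<times> int) set" where
  "S_set q = {1, 5} \<times> {1..q-1}"

definition p_act :: "int \<Rightarrow> int \<Rightarrow> int \<times> int \<Rightarrow> int \<times> int" where
  "p_act p q x = (case x of (b, a) \<Rightarrow>
     (6 - b, ((p * a - ((p + 1) div 6) * b + 1 - 1) mod (q - 1)) + 1))"

definition p_orbit :: "int \<Rightarrow> int \<Rightarrow> int \<times> int \<Rightarrow> (int \<times> int) set" where
  "p_orbit p q x =
     (let R = {(y, p_act p q y) | y. y \<in> S_set q} in {z. (x, z) \<in> (R \<union> R\<inverse>)\<^sup>*})"

definition S0_set :: "int \<Rightarrow> (int \<times> int) set" where
  "S0_set q = {(1, a) | a. 0 < a \<and> 6 * a < q}"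

definition S1_set :: "int \<Rightarrow> (int \<times> int) set" where
  "S1_set q = {(5, a) | a. 5 * q < 6 * a \<and> a < q}"

end

theory Submission
  imports Defs "HOL-Number_Theory.Cong"
begin

lemma abstract_count:
  fixes act :: "'a \<Rightarrow> 'a" and e :: "'a \<Rightarrow> int"
  assumes fin: "finite orb" and closed: "\<forall>z\<in>orb. act z \<in> orb" and orbS: "orb \<subseteq> S"
    and actS: "\<forall>z\<in>S. act z \<in> S" and eact: "\<forall>z\<in>S. e (act z) = P * e z mod N"
    and erange: "\<forall>z\<in>S. 0 \<le> e z \<and> e z < N"
    and einj: "inj_on e S"
    and A0: "\<forall>z\<in>S. z \<in> A0 \<longleftrightarrow> e z \<in> J0"
    and A1: "\<forall>z\<in>S. z \<in> A1 \<longleftrightarrow> e z \<in> J1"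
    and phinj: "inj_on \<phi> J0" and phiJ: "\<forall>j\<in>J0. \<phi> j \<in> J1"
    and phipow: "\<forall>j\<in>J0. \<exists>n. P ^ n * j mod N = \<phi> j"
  shows "card (orb \<inter> A0) \<le> card (orb \<inter> A1)"
proof -
  have iter: "(act ^^ n) z \<in> S \<and> e ((act ^^ n) z) = P ^ n * e z mod N" if "z \<in> S" for n z
  proof (induction n)
    case 0
    then show ?case using that erange by simp
  next
    case (Suc n)
    then show ?case using actS eact
      by (simp add: mod_mult_right_eq mult.assoc)
  qed
  have iterO: "(act ^^ n) z \<in> orb" if "z \<in> orb" for n z
    using that closed by (induction n) auto
  define F where "F z = (act ^^ (SOME n. P ^ n * e z mod N = \<phi> (e z))) z" for z
  have F: "F z \<in> orb \<and> e (F z) = \<phi> (e z)" if "z \<in> orb \<inter> A0" for z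
  proof -
    have zS: "z \<in> S" using that orbS by auto
    have "e z \<in> J0" using A0 zS that by auto
    then have "\<exists>n. P ^ n * e z mod N = \<phi> (e z)" using phipow by auto
    then have "P ^ (SOME n. P ^ n * e z mod N = \<phi> (e z)) * e z mod N = \<phi> (e z)"
      by (rule someI_ex)
    then show ?thesis using iter[OF zS] iterO that unfolding F_def by auto
  qed
  have "inj_on F (orb \<inter> A0)"
  proof (rule inj_onI)
    fix z w assume z: "z \<in> orb \<inter> A0" and w: "w \<in> orb \<inter> A0" and "F z = F w"
    then have "\<phi> (e z) = \<phi> (e w)" using F by metis
    moreover have "e z \<in> J0" "e w \<in> J0" using z w A0 orbS by auto
    ultimately have "e z = e w" using phinj by (meson inj_onD)
    then show "z = w" using einj z w orbS by (meson IntD1 inj_onD subsetD)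
  qed
  moreover have "F ` (orb \<inter> A0) \<subseteq> orb \<inter> A1"
  proof
    fix y assume "y \<in> F ` (orb \<inter> A0)"
    then obtain z where z: "z \<in> orb \<inter> A0" and y: "y = F z" by auto
    have "e z \<in> J0" using z A0 orbS by auto
    then have "e y \<in> J1" using F[OF z] y phiJ by auto
    moreover have "y \<in> orb" using F[OF z] y by auto
    ultimately show "y \<in> orb \<inter> A1" using A1 orbS by auto
  qed
  ultimately show ?thesis using fin by (intro card_inj_on_le) auto
qed

definition ee :: "int \<times> int \<Rightarrow> int" where "ee z = 6 * snd z - fst z"

lemma mod6_lemma:
  fixes X b m :: int
  assumes "m > 0" "0 \<le> b" "b < 6"
  shows "(6 * X + b) mod (6 * m) = 6 * (X mod m) + b"
proof -
  have h: "X div m * m + X mod m = X" by (rule div_mult_mod_eq)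
  have eq: "6 * X + b = (6 * (X mod m) + b) + (X div m) * (6 * m)"
  proof -
    have "(6 * (X mod m) + b) + (X div m) * (6 * m) = 6 * (X div m * m + X mod m) + b"
      by (simp only: distrib_left mult.assoc mult.commute mult.left_commute add.commute add.left_commute)
    then have "(6 * (X mod m) + b) + (X div m) * (6 * m) = 6 * X + b" unfolding h .
    then show ?thesis by simp
  qed
  have "0 \<le> X mod m" "X mod m < m" using assms by auto
  then have "0 \<le> 6 * (X mod m) + b" "6 * (X mod m) + b < 6 * m" using assms by linarith+
  then show ?thesis by (subst eq, subst mod_mult_self1) simp
qed

lemma act_facts:
  fixes P q :: int
  assumes P6: "P mod 6 = 5" and q2: "q \<ge> 2" and z: "z \<in> S_set q"
  shows "p_act P q z \<in> S_set q \<and> ee (p_act P q z) = P * ee z mod (6 * (q - 1))"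
proof -
  obtain b a where zba: "z = (b, a)" and b: "b = 1 \<or> b = 5" and a: "1 \<le> a" "a \<le> q - 1"
    using z unfolding S_set_def by auto
  define k where "k = (P + 1) div 6"
  have Pk: "P = 6 * k - 1" using P6 unfolding k_def by presburger
  define X where "X = P * a - k * b"
  have act: "p_act P q z = (6 - b, X mod (q - 1) + 1)"
    unfolding p_act_def zba X_def k_def by simp
  have r1: "0 \<le> X mod (q - 1)" "X mod (q - 1) < q - 1" using q2 by auto
  have inS: "p_act P q z \<in> S_set q" using act b r1 unfolding S_set_def by auto
  have "ee (p_act P q z) = 6 * (X mod (q - 1)) + b" using act unfolding ee_def by simp
  also have "\<dots> = (6 * X + b) mod (6 * (q - 1))"
    using mod6_lemma[of "q - 1" b X] q2 b by auto
  also have "6 * X + b = P * ee z" unfolding X_def ee_def zba by (simp add: Pk algebra_simps)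
  finally show ?thesis using inS by simp
qed

lemma ee_facts:
  assumes "z \<in> S_set q"
  shows "0 \<le> ee z \<and> ee z < 6 * (q - 1)"
    "z \<in> S0_set q \<longleftrightarrow> ee z \<in> {j. j mod 6 = 5 \<and> 0 < j \<and> j < q - 1}"
    "z \<in> S1_set q \<longleftrightarrow> ee z \<in> {j. j mod 6 = 1 \<and> 5 * (q - 1) < j \<and> j < 6 * (q - 1)}"
proof -
  obtain b a where zba: "z = (b, a)" and b: "b = 1 \<or> b = 5" and a: "1 \<le> a" "a \<le> q - 1"
    using assms unfolding S_set_def by auto
  show "0 \<le> ee z \<and> ee z < 6 * (q - 1)" using b a unfolding zba ee_def by auto
  have m1: "(6 * a - 1) mod 6 = 5" by presburger
  have m5: "(6 * a - 5) mod 6 = 1" by presburger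
  show "z \<in> S0_set q \<longleftrightarrow> ee z \<in> {j. j mod 6 = 5 \<and> 0 < j \<and> j < q - 1}"
    using b a m1 m5 unfolding zba ee_def S0_set_def by auto
  show "z \<in> S1_set q \<longleftrightarrow> ee z \<in> {j. j mod 6 = 1 \<and> 5 * (q - 1) < j \<and> j < 6 * (q - 1)}"
    using b a m1 m5 unfolding zba ee_def S1_set_def by auto
qed

lemma ee_inj: "inj_on ee (S_set q)"
proof (rule inj_onI)
  fix z w assume z: "z \<in> S_set q" and w: "w \<in> S_set q" and e: "ee z = ee w"
  obtain b a where zba: "z = (b, a)" and b: "b = 1 \<or> b = 5" using z unfolding S_set_def by auto
  obtain b' a' where wba: "w = (b', a')" and b': "b' = 1 \<or> b' = 5" using w unfolding S_set_def by auto
  have "6 * a - b = 6 * a' - b'" using e unfolding zba wba ee_def by simp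
  then have "b = b' \<and> a = a'" using b b' by presburger
  then show "z = w" using zba wba by simp
qed

lemma pow_mod6:
  fixes P :: int
  assumes "P mod 6 = 5"
  shows "P ^ f mod 6 = (if even f then 1 else 5)"
proof (induction f)
  case 0
  then show ?case by simp
next
  case (Suc f)
  have "P ^ Suc f mod 6 = ((P mod 6) * (P ^ f mod 6)) mod 6"
    by (simp add: mod_mult_eq)
  then show ?case using Suc assms by auto
qed

lemma odd_phi:
  fixes q j :: int
  assumes "q mod 6 = 5" "q \<ge> 2" "j mod 6 = 5" "0 < j" "j < q - 1"
  shows "q * j mod (6 * (q - 1)) = j + 5 * (q - 1)"
proof -
  obtain m where m: "j = 6 * m + 5" using assms(3) by (metis div_mult_mod_eq mult.commute)
  have "q * j = (j + 5 * (q - 1)) + m * (6 * (q - 1))" using m by (simp add: algebra_simps)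
  then have "q * j mod (6 * (q - 1)) = (j + 5 * (q - 1)) mod (6 * (q - 1))" by simp
  also have "\<dots> = j + 5 * (q - 1)" using assms by (intro mod_pos_pos_trivial) auto
  finally show ?thesis .
qed

lemma odd_psi:
  fixes q y :: int
  assumes "q mod 6 = 5" "q \<ge> 2" "y mod 6 = 1" "5 * (q - 1) < y" "y < 6 * (q - 1)"
  shows "q * y mod (6 * (q - 1)) = y - 5 * (q - 1)"
proof -
  obtain m where m: "y = 6 * m + 1" using assms(3) by (metis div_mult_mod_eq mult.commute)
  have "q * y = (y - 5 * (q - 1)) + (m + 1) * (6 * (q - 1))" using m by (simp add: algebra_simps)
  then have "q * y mod (6 * (q - 1)) = (y - 5 * (q - 1)) mod (6 * (q - 1))" by simp
  also have "\<dots> = y - 5 * (q - 1)" using assms by (intro mod_pos_pos_trivial) auto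
  finally show ?thesis .
qed

lemma trans_even:
  fixes q y c :: int
  assumes "q mod 6 = 1" "y mod 6 = c"
  shows "\<exists>M. q ^ t * y = y + int t * (q - 1) * c + M * (6 * (q - 1))"
proof (induction t)
  case 0
  show ?case by (rule exI[of _ 0]) simp
next
  case (Suc t)
  then obtain M where M: "q ^ t * y = y + int t * (q - 1) * c + M * (6 * (q - 1))" by blast
  obtain r where r: "q = 6 * r + 1" using assms(1) by (metis div_mult_mod_eq mult.commute)
  obtain s where s: "y = 6 * s + c" using assms(2) by (metis div_mult_mod_eq mult.commute)
  have "q ^ Suc t * y = q * (q ^ t * y)" by simp
  also have "\<dots> = y + int (Suc t) * (q - 1) * c + (M + s + int t * c * r + (q - 1) * M) * (6 * (q - 1))"
    unfolding M unfolding r s by (simp add: algebra_simps)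
  finally show ?case by blast
qed

lemma even_phi:
  fixes q y :: int
  assumes q6: "q mod 6 = 1" and q2: "q \<ge> 2" and y6: "y mod 6 = 1"
  shows "\<exists>t. q ^ t * y mod (6 * (q - 1)) = 5 * (q - 1) + y mod (q - 1)"
proof -
  define N where "N = 6 * (q - 1)"
  define y0 where "y0 = y mod N"
  define s where "s = y0 div (q - 1)"
  define r where "r = y0 mod (q - 1)"
  have Npos: "N > 0" using q2 unfolding N_def by auto
  have y0r: "0 \<le> y0" "y0 < N" using Npos unfolding y0_def by auto
  have rr: "r = y mod (q - 1)" unfolding r_def y0_def N_def by (rule mod_mod_cancel) (rule dvd_triv_right)
  have y0eq: "y0 = s * (q - 1) + r" unfolding s_def r_def by (metis div_mult_mod_eq)
  have s0: "0 \<le> s" unfolding s_def using y0r q2 by (simp add: pos_imp_zdiv_nonneg_iff)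
  have rb: "0 \<le> r" "r < q - 1" unfolding r_def using q2 by auto
  have s5: "s \<le> 5"
  proof (rule ccontr)
    assume "\<not> s \<le> 5"
    then have "s * (q - 1) \<ge> 6 * (q - 1)" using q2 by (intro mult_right_mono) auto
    then show False using y0eq y0r rb unfolding N_def by linarith
  qed
  define t where "t = nat (5 - s)"
  obtain M where M: "q ^ t * y = y + int t * (q - 1) * 1 + M * N"
    using trans_even[OF q6 y6, of t] unfolding N_def by blast
  have yeq: "y = y0 + (y div N) * N" unfolding y0_def by simp
  have "q ^ t * y = (5 * (q - 1) + r) + (M + y div N) * N"
    using M yeq y0eq s5 unfolding t_def by (simp add: algebra_simps)
  then have "q ^ t * y mod N = (5 * (q - 1) + r) mod N" by simp
  also have "\<dots> = 5 * (q - 1) + r" using rb q2 unfolding N_def by (intro mod_pos_pos_trivial) auto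
  finally show ?thesis unfolding N_def rr by blast
qed

lemma even_psi:
  fixes q x :: int
  assumes q6: "q mod 6 = 1" and q2: "q \<ge> 2" and x6: "x mod 6 = 5"
  shows "\<exists>t. q ^ t * x mod (6 * (q - 1)) = x mod (q - 1)"
proof -
  define N where "N = 6 * (q - 1)"
  define y0 where "y0 = x mod N"
  define s where "s = y0 div (q - 1)"
  define r where "r = y0 mod (q - 1)"
  have Npos: "N > 0" using q2 unfolding N_def by auto
  have y0r: "0 \<le> y0" "y0 < N" using Npos unfolding y0_def by auto
  have rr: "r = x mod (q - 1)" unfolding r_def y0_def N_def by (rule mod_mod_cancel) (rule dvd_triv_right)
  have y0eq: "y0 = s * (q - 1) + r" unfolding s_def r_def by (metis div_mult_mod_eq)
  have s0: "0 \<le> s" unfolding s_def using y0r q2 by (simp add: pos_imp_zdiv_nonneg_iff)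
  have rb: "0 \<le> r" "r < q - 1" unfolding r_def using q2 by auto
  define t where "t = nat s"
  obtain M where M: "q ^ t * x = x + int t * (q - 1) * 5 + M * N"
    using trans_even[OF q6 x6, of t] unfolding N_def by blast
  have yeq: "x = y0 + (x div N) * N" unfolding y0_def by simp
  have "q ^ t * x = r + (M + x div N + s) * N"
    using M yeq y0eq s0 unfolding t_def N_def by (simp add: algebra_simps)
  then have "q ^ t * x mod N = r mod N" by simp
  also have "\<dots> = r" using rb q2 unfolding N_def by (intro mod_pos_pos_trivial) auto
  finally show ?thesis unfolding N_def rr by blast
qed

lemma even_maps:
  fixes P q :: int
  assumes P6: "P mod 6 = 5" and q6: "q mod 6 = 1" and q2: "q \<ge> 2" and cop: "coprime P (q - 1)"
    and J0: "J0 = {j. j mod 6 = 5 \<and> 0 < j \<and> j < q - 1}"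
    and J1: "J1 = {j. j mod 6 = 1 \<and> 5 * (q - 1) < j \<and> j < 6 * (q - 1)}"
    and qf: "q = P ^ f"
  shows "inj_on (\<lambda>j. 5 * (q - 1) + P * j mod (q - 1)) J0"
    "\<forall>j\<in>J0. 5 * (q - 1) + P * j mod (q - 1) \<in> J1"
    "\<forall>j\<in>J0. \<exists>n. P ^ n * j mod (6 * (q - 1)) = 5 * (q - 1) + P * j mod (q - 1)"
    "inj_on (\<lambda>y. P * y mod (q - 1)) J1"
    "\<forall>y\<in>J1. P * y mod (q - 1) \<in> J0"
    "\<forall>y\<in>J1. \<exists>n. P ^ n * y mod (6 * (q - 1)) = P * y mod (q - 1)"
proof -
  obtain w where w: "q - 1 = 6 * w" using q6 by (metis div_mult_mod_eq add_diff_cancel_right' mult.commute)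
  have d6: "6 dvd (q - 1)" using w by simp
  have m6: "(P * j mod (q - 1)) mod 6 = (P * j) mod 6" for j by (rule mod_mod_cancel[OF d6])
  have Pj0: "(P * j) mod 6 = 1" if "j mod 6 = 5" for j
  proof -
    have "(P * j) mod 6 = ((P mod 6) * (j mod 6)) mod 6" by (simp add: mod_mult_eq)
    then show ?thesis using P6 that by simp
  qed
  have Pj1: "(P * j) mod 6 = 5" if "j mod 6 = 1" for j
  proof -
    have "(P * j) mod 6 = ((P mod 6) * (j mod 6)) mod 6" by (simp add: mod_mult_eq)
    then show ?thesis using P6 that by simp
  qed
  have canc: "j1 = j2" if "P * j1 mod (q - 1) = P * j2 mod (q - 1)" "j1 - c \<in> {0..<q-1}" "j2 - c \<in> {0..<q-1}"
    for j1 j2 c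
  proof -
    have "[P * j1 = P * j2] (mod (q - 1))" using that unfolding cong_def by simp
    then have "[j1 = j2] (mod (q - 1))" using cong_mult_lcancel[OF cop] by simp
    then have "[j1 - c = j2 - c] (mod (q - 1))" by (simp add: cong_diff)
    then have "(j1 - c) mod (q - 1) = (j2 - c) mod (q - 1)" unfolding cong_def .
    then have "j1 - c = j2 - c" using that by simp
    then show ?thesis by simp
  qed
  show "inj_on (\<lambda>j. 5 * (q - 1) + P * j mod (q - 1)) J0"
    by (rule inj_onI) (rule canc[of _ _ 0], auto simp: J0)
  show "\<forall>j\<in>J0. 5 * (q - 1) + P * j mod (q - 1) \<in> J1"
  proof
    fix j assume j: "j \<in> J0"
    have a: "(P * j mod (q - 1)) mod 6 = 1" using m6 Pj0 j J0 by simp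
    have b: "0 \<le> P * j mod (q - 1)" "P * j mod (q - 1) < q - 1" using q2 by auto
    have c: "P * j mod (q - 1) \<noteq> 0" using a by auto
    have "5 * (q - 1) + P * j mod (q - 1) = P * j mod (q - 1) + (5 * w) * 6" using w by simp
    then have "(5 * (q - 1) + P * j mod (q - 1)) mod 6 = 1" using a by (metis mod_mult_self1)
    then show "5 * (q - 1) + P * j mod (q - 1) \<in> J1" using b c unfolding J1 by auto
  qed
  show "\<forall>j\<in>J0. \<exists>n. P ^ n * j mod (6 * (q - 1)) = 5 * (q - 1) + P * j mod (q - 1)"
  proof
    fix j assume j: "j \<in> J0"
    obtain t where t: "q ^ t * (P * j) mod (6 * (q - 1)) = 5 * (q - 1) + (P * j) mod (q - 1)"
      using even_phi[OF q6 q2 Pj0] j J0 by auto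
    have "P ^ (1 + f * t) * j = q ^ t * (P * j)" unfolding qf by (simp add: power_add power_mult)
    then show "\<exists>n. P ^ n * j mod (6 * (q - 1)) = 5 * (q - 1) + P * j mod (q - 1)" using t by metis
  qed
  show "inj_on (\<lambda>y. P * y mod (q - 1)) J1"
    by (rule inj_onI) (rule canc[of _ _ "5 * (q - 1)"], auto simp: J1)
  show "\<forall>y\<in>J1. P * y mod (q - 1) \<in> J0"
  proof
    fix y assume y: "y \<in> J1"
    have a: "(P * y mod (q - 1)) mod 6 = 5" using m6 Pj1 y J1 by simp
    have b: "0 \<le> P * y mod (q - 1)" "P * y mod (q - 1) < q - 1" using q2 by auto
    have c: "P * y mod (q - 1) \<noteq> 0" using a by auto
    show "P * y mod (q - 1) \<in> J0" using a b c unfolding J0 by auto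
  qed
  show "\<forall>y\<in>J1. \<exists>n. P ^ n * y mod (6 * (q - 1)) = P * y mod (q - 1)"
  proof
    fix y assume y: "y \<in> J1"
    obtain t where t: "q ^ t * (P * y) mod (6 * (q - 1)) = (P * y) mod (q - 1)"
      using even_psi[OF q6 q2 Pj1] y J1 by auto
    have "P ^ (1 + f * t) * y = q ^ t * (P * y)" unfolding qf by (simp add: power_add power_mult)
    then show "\<exists>n. P ^ n * y mod (6 * (q - 1)) = P * y mod (q - 1)" using t by metis
  qed
qed

theorem proposition10p2:
  fixes p :: nat and f :: nat
  assumes "prime p" and "int p mod 6 = 5" and "f \<ge> 1"
    and "q = int p ^ f"
    and "orb = p_orbit (int p) q x" and "x \<in> S_set q"
  shows "card (orb \<inter> S0_set q) = card (orb \<inter> S1_set q)"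
proof -
  define P where "P = int p"
  have P6: "P mod 6 = 5" using assms(2) unfolding P_def .
  have P5: "P \<ge> 5" using P6 unfolding P_def by presburger
  have qf: "q = P ^ f" using assms(4) unfolding P_def .
  have "P ^ 1 \<le> P ^ f" using P5 assms(3) by (intro power_increasing) auto
  then have q2: "q \<ge> 2" using P5 qf by simp
  have cop: "coprime P (q - 1)"
  proof -
    have "coprime (q - 1) q" by simp
    then have "coprime (q - 1) P" using qf assms(3) by simp
    then show ?thesis by (simp add: coprime_commute)
  qed
  define S where "S = S_set q"
  define act where "act = p_act P q"
  define R where "R = {(y, act y) | y. y \<in> S}"
  have orb: "orb = {z. (x, z) \<in> (R \<union> R\<inverse>)\<^sup>*}"
    using assms(5) unfolding p_orbit_def R_def act_def S_def P_def by (simp add: Let_def)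
  have xS: "x \<in> S" using assms(6) unfolding S_def .
  have actF: "\<forall>z\<in>S. act z \<in> S \<and> ee (act z) = P * ee z mod (6 * (q - 1))"
    using act_facts[OF P6 q2] unfolding act_def S_def by blast
  have orbS: "orb \<subseteq> S"
  proof
    fix z assume "z \<in> orb"
    then have "(x, z) \<in> (R \<union> R\<inverse>)\<^sup>*" using orb by simp
    then show "z \<in> S"
    proof (induction rule: rtrancl_induct)
      case base then show ?case using xS .
    next
      case (step y z)
      then show ?case using actF unfolding R_def by auto
    qed
  qed
  have closed: "\<forall>z\<in>orb. act z \<in> orb"
  proof
    fix z assume z: "z \<in> orb"
    have "z \<in> S" using z orbS by auto
    then have "(z, act z) \<in> R" unfolding R_def by blast
    then have "(z, act z) \<in> R \<union> R\<inverse>" by blast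
    then show "act z \<in> orb" using z orb by (auto intro: rtrancl_into_rtrancl)
  qed
  have finS: "finite S" unfolding S_def S_set_def by simp
  have fin: "finite orb" using finite_subset[OF orbS finS] .
  have er: "\<forall>z\<in>S. 0 \<le> ee z \<and> ee z < 6 * (q - 1)" using ee_facts(1) unfolding S_def by blast
  have einj: "inj_on ee S" using ee_inj unfolding S_def .
  define J0 where "J0 = {j. j mod 6 = 5 \<and> 0 < j \<and> j < q - 1}"
  define J1 where "J1 = {j::int. j mod 6 = 1 \<and> 5 * (q - 1) < j \<and> j < 6 * (q - 1)}"
  have A0: "\<forall>z\<in>S. z \<in> S0_set q \<longleftrightarrow> ee z \<in> J0" using ee_facts(2) unfolding S_def J0_def by blast
  have A1: "\<forall>z\<in>S. z \<in> S1_set q \<longleftrightarrow> ee z \<in> J1" using ee_facts(3) unfolding S_def J1_def by blast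
  have actS: "\<forall>z\<in>S. act z \<in> S" and eact: "\<forall>z\<in>S. ee (act z) = P * ee z mod (6 * (q - 1))"
    using actF by auto
  have main: "card (orb \<inter> S0_set q) \<le> card (orb \<inter> S1_set q) \<and>
              card (orb \<inter> S1_set q) \<le> card (orb \<inter> S0_set q)"
  proof (cases "even f")
    case True
    then have q6: "q mod 6 = 1" using pow_mod6[OF P6, of f] qf by simp
    note EM = even_maps[OF P6 q6 q2 cop J0_def J1_def qf]
    show ?thesis
      using abstract_count[of orb act S ee P "6 * (q - 1)" "S0_set q" J0 "S1_set q" J1 "\<lambda>j. 5 * (q - 1) + P * j mod (q - 1)", OF fin closed orbS actS eact er einj A0 A1 EM(1) EM(2) EM(3)]
        abstract_count[of orb act S ee P "6 * (q - 1)" "S1_set q" J1 "S0_set q" J0 "\<lambda>y. P * y mod (q - 1)", OF fin closed orbS actS eact er einj A1 A0 EM(4) EM(5) EM(6)] by (rule conjI)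
  next
    case False
    then have q6: "q mod 6 = 5" using pow_mod6[OF P6, of f] qf by simp
    have i1: "inj_on (\<lambda>j. j + 5 * (q - 1)) J0" by (rule inj_onI) simp
    have i2: "inj_on (\<lambda>j. j - 5 * (q - 1)) J1" by (rule inj_onI) simp
    have m1: "\<forall>j\<in>J0. j + 5 * (q - 1) \<in> J1"
    proof
      fix j assume j: "j \<in> J0"
      have "j mod 6 = 5" using j unfolding J0_def by simp
      then have "(j + 5 * (q - 1)) mod 6 = 1" using q6 by presburger
      then show "j + 5 * (q - 1) \<in> J1" using j unfolding J0_def J1_def by auto
    qed
    have m2: "\<forall>j\<in>J1. j - 5 * (q - 1) \<in> J0"
    proof
      fix j assume j: "j \<in> J1"
      have "j mod 6 = 1" using j unfolding J1_def by simp
      then have "(j - 5 * (q - 1)) mod 6 = 5" using q6 by presburger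
      then show "j - 5 * (q - 1) \<in> J0" using j unfolding J0_def J1_def by auto
    qed
    have p1: "\<forall>j\<in>J0. \<exists>n. P ^ n * j mod (6 * (q - 1)) = j + 5 * (q - 1)"
    proof
      fix j assume "j \<in> J0"
      then have "P ^ f * j mod (6 * (q - 1)) = j + 5 * (q - 1)"
        using odd_phi[OF q6 q2, of j] qf unfolding J0_def by simp
      then show "\<exists>n. P ^ n * j mod (6 * (q - 1)) = j + 5 * (q - 1)" by blast
    qed
    have p2: "\<forall>j\<in>J1. \<exists>n. P ^ n * j mod (6 * (q - 1)) = j - 5 * (q - 1)"
    proof
      fix j assume "j \<in> J1"
      then have "P ^ f * j mod (6 * (q - 1)) = j - 5 * (q - 1)"
        using odd_psi[OF q6 q2, of j] qf unfolding J1_def by simp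
      then show "\<exists>n. P ^ n * j mod (6 * (q - 1)) = j - 5 * (q - 1)" by blast
    qed
    show ?thesis
      using abstract_count[of orb act S ee P "6 * (q - 1)" "S0_set q" J0 "S1_set q" J1 "\<lambda>j. j + 5 * (q - 1)", OF fin closed orbS actS eact er einj A0 A1 i1 m1 p1]
        abstract_count[of orb act S ee P "6 * (q - 1)" "S1_set q" J1 "S0_set q" J0 "\<lambda>j. j - 5 * (q - 1)", OF fin closed orbS actS eact er einj A1 A0 i2 m2 p2] by (rule conjI)
  qed
  then show ?thesis by linarith
qed

end
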